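(* Let $\varepsilon\in(0,1)$ and let $G_0$ be the symmetric game with payoff matrix $$U_0= \begin{pmatrix} 0 & -1 & \varepsilon & 0 \\ \varepsilon & 0 & -1 & 0 \\ -1 & \varepsilon & 0 & 0 \\ \frac{-1+\varepsilon}{3} & \frac{-1+\varepsilon}{3} & \frac{-1+\varepsilon}{3} & 0 \end{pmatrix}.$$ Let $n=(1/3,1/3,1/3,0)$, $E_0=\{\lambda n+(1-\lambda)e_4:\lambda\in[0,1]\}$, and $$V_0(x)=\frac12\sum_{i=1}^4\big[\max(0,(U_0x)_i-x\cdot U_0x)\big]^2 .$$ Then there exists an open neighborhood $N_{eq}$ of $E_0$ in $S_4$ such that, for every solution $x(\cdot)$ of the Brown-von Neumann-Nash dynamics in $G_0$, the function $v_0(t)=V_0(x(t))$ satisfies $\dot v_0(t)>0$ whenever $x(t)\in N_{eq}\setminus E_0$.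
   Context: The Brown-von Neumann-Nash (BNN) dynamics for payoff matrix $U$ on $S_4$ is $\dot x_i=k_i(x)-x_i\sum_j k_j(x)$ with $k_i(x)=\max(0,(Ux)_i-x\cdot Ux)$. $e_4$ is the fourth vertex of $S_4$. *)

theory Defs
  imports "HOL-Analysis.Analysis"
begin

text \<open>Vectors in R^4 are modelled as real^4; index 1..4 of the paper corresponds to
  the elements 1,2,3,4 of the numeral type 4.\<close>

definition simplex4 :: "(real^4) set" where
  "simplex4 = {x. (\<forall>i. 0 \<le> x $ i) \<and> (\<Sum>i\<in>UNIV. x $ i) = 1}"

definition e4 :: "real^4" where
  "e4 = axis 4 1"

definition nvec :: "real^4" where
  "nvec = vector [1/3, 1/3, 1/3, 0]"

definition E0 :: "(real^4) set" where
  "E0 = {l *\<^sub>R nvec + (1 - l) *\<^sub>R e4 | l. l \<in> {0..1}}"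

definition U0 :: "real \<Rightarrow> real^4^4" where
  "U0 eps = vector [
     vector [0, -1, eps, 0],
     vector [eps, 0, -1, 0],
     vector [-1, eps, 0, 0],
     vector [(-1 + eps)/3, (-1 + eps)/3, (-1 + eps)/3, 0]]"

definition bnn_k :: "real^4^4 \<Rightarrow> real^4 \<Rightarrow> 4 \<Rightarrow> real" where
  "bnn_k U x i = max 0 ((U *v x) $ i - x \<bullet> (U *v x))"

definition bnn_field :: "real^4^4 \<Rightarrow> real^4 \<Rightarrow> real^4" where
  "bnn_field U x = (\<chi> i. bnn_k U x i - x $ i * (\<Sum>j\<in>UNIV. bnn_k U x j))"

definition V0 :: "real \<Rightarrow> real^4 \<Rightarrow> real" where
  "V0 eps x = 1/2 * (\<Sum>i\<in>UNIV. (bnn_k (U0 eps) x i)^2)"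

end

theory Submission
  imports Defs
begin

lemma ident_gen:
  fixes a b c d u1 u2 u3 u4 m g1 g2 g3 g4 k1 k2 k3 k4 K f1 f2 f3 f4 v1 v2 v3 v4 w1 w2 w3 w4 :: real
  assumes m: "m = a*u1+b*u2+c*u3+d*u4"
 and g: "g1 = u1 - m" "g2 = u2 - m" "g3 = u3 - m" "g4 = u4 - m"
 and K: "K = k1+k2+k3+k4"
 and f: "f1 = k1 - a*K" "f2 = k2 - b*K" "f3 = k3 - c*K" "f4 = k4 - d*K"
 and v: "v1 = w1 - K*u1" "v2 = w2 - K*u2" "v3 = w3 - K*u3" "v4 = w4 - K*u4"
 shows "k1*(v1 - (f1*u1+f2*u2+f3*u3+f4*u4) - (a* v1+b* v2+c* v3+d* v4))
          + k2*(v2 - (f1*u1+f2*u2+f3*u3+f4*u4) - (a* v1+b* v2+c* v3+d* v4))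
          + k3*(v3 - (f1*u1+f2*u2+f3*u3+f4*u4) - (a* v1+b* v2+c* v3+d* v4))
          + k4*(v4 - (f1*u1+f2*u2+f3*u3+f4*u4) - (a* v1+b* v2+c* v3+d* v4))
       = (k1*w1+k2*w2+k3*w3+k4*w4) - 2*K*(k1*g1+k2*g2+k3*g3+k4*g4) - K*(a*w1+b*w2+c*w3+d*w4)"
proof -
  have A: "f1*u1+f2*u2+f3*u3+f4*u4 = k1*g1+k2*g2+k3*g3+k4*g4"
    unfolding f g K m by (simp add: algebra_simps)
  have B: "a* v1+b* v2+c* v3+d* v4 = (a*w1+b*w2+c*w3+d*w4) - K*m"
    unfolding v m by (simp add: algebra_simps)
  have C: "k1* v1+k2* v2+k3* v3+k4* v4 = (k1*w1+k2*w2+k3*w3+k4*w4) - K*(k1*g1+k2*g2+k3*g3+k4*g4) - K*K*m"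
    unfolding v g K by (simp add: algebra_simps)
  have "k1*(v1 - (f1*u1+f2*u2+f3*u3+f4*u4) - (a* v1+b* v2+c* v3+d* v4))
          + k2*(v2 - (f1*u1+f2*u2+f3*u3+f4*u4) - (a* v1+b* v2+c* v3+d* v4))
          + k3*(v3 - (f1*u1+f2*u2+f3*u3+f4*u4) - (a* v1+b* v2+c* v3+d* v4))
          + k4*(v4 - (f1*u1+f2*u2+f3*u3+f4*u4) - (a* v1+b* v2+c* v3+d* v4))
     = (k1* v1+k2* v2+k3* v3+k4* v4) - K*(f1*u1+f2*u2+f3*u3+f4*u4) - K*(a* v1+b* v2+c* v3+d* v4)"
    unfolding K by (simp add: algebra_simps)
  then show ?thesis unfolding A B C by (simp add: algebra_simps)
qed

lemma alg:
 fixes e a b c d \<delta> :: real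
 assumes e: "0<e" "e<1" and nn: "0\<le>a" "0\<le>b" "0\<le>c" "0\<le>d" and s1: "a+b+c+d=1"
 and dl: "\<delta> = (1-e)/200" and dab: "\<bar>a-b\<bar><\<delta>" "\<bar>b-c\<bar><\<delta>" "\<bar>c-a\<bar><\<delta>" and ne: "\<not>(a=b \<and> b=c)"
 and u: "u1 = -b + e*c" "u2 = e*a - c" "u3 = -a + e*b" "u4 = (-1+e)/3*(a+b+c)"
 and m: "m = a*u1+b*u2+c*u3+d*u4"
 and g: "g1 = u1 - m" "g2 = u2 - m" "g3 = u3 - m" "g4 = u4 - m"
 and k: "k1 = max 0 g1" "k2 = max 0 g2" "k3 = max 0 g3" "k4 = max 0 g4"
 and K: "K = k1+k2+k3+k4"
 and f: "f1 = k1 - a*K" "f2 = k2 - b*K" "f3 = k3 - c*K" "f4 = k4 - d*K"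
 and v: "v1 = -f2 + e*f3" "v2 = e*f1 - f3" "v3 = -f1 + e*f2" "v4 = (-1+e)/3*(f1+f2+f3)"
 shows "0 < k1*(v1 - (f1*u1+f2*u2+f3*u3+f4*u4) - (a* v1+b* v2+c* v3+d* v4))
          + k2*(v2 - (f1*u1+f2*u2+f3*u3+f4*u4) - (a* v1+b* v2+c* v3+d* v4))
          + k3*(v3 - (f1*u1+f2*u2+f3*u3+f4*u4) - (a* v1+b* v2+c* v3+d* v4))
          + k4*(v4 - (f1*u1+f2*u2+f3*u3+f4*u4) - (a* v1+b* v2+c* v3+d* v4))"
proof -
  have dd: "d = 1-a-b-c" using s1 by simp
  define D where "D = (a-b)^2+(b-c)^2+(c-a)^2"
  have g4D: "g4 = -(1-e)*D/6" unfolding D_def g u m dd by (simp add: field_simps power2_eq_square)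
  have D0: "D \<ge> 0" unfolding D_def by simp
  have g4n: "g4 \<le> 0"
  proof -
    have "0 \<le> (1-e)*D" using D0 e by simp
    moreover have "g4 = -((1-e)*D)/6" using g4D by (simp add: algebra_simps)
    ultimately show ?thesis by linarith
  qed
  have k40: "k4 = 0" using k g4n by simp
  have gsum: "g1+g2+g3 = 3*g4" unfolding g u by (simp add: algebra_simps)
  define Q where "Q = k1*g1+k2*g2+k3*g3+k4*g4"
  define kUk where "kUk = k1*(-k2+e*k3) + k2*(e*k1-k3) + k3*(-k1+e*k2) + k4*((-1+e)/3*(k1+k2+k3))"
  define xUk where "xUk = a*(-k2+e*k3) + b*(e*k1-k3) + c*(-k1+e*k2) + d*((-1+e)/3*(k1+k2+k3))"
  have vw: "v1 = (-k2+e*k3) - K*u1" "v2 = (e*k1-k3) - K*u2" "v3 = (-k1+e*k2) - K*u3"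
      "v4 = (-1+e)/3*(k1+k2+k3) - K*u4"
    unfolding v f u by (simp_all add: field_simps)
  have ident: "k1*(v1 - (f1*u1+f2*u2+f3*u3+f4*u4) - (a* v1+b* v2+c* v3+d* v4))
          + k2*(v2 - (f1*u1+f2*u2+f3*u3+f4*u4) - (a* v1+b* v2+c* v3+d* v4))
          + k3*(v3 - (f1*u1+f2*u2+f3*u3+f4*u4) - (a* v1+b* v2+c* v3+d* v4))
          + k4*(v4 - (f1*u1+f2*u2+f3*u3+f4*u4) - (a* v1+b* v2+c* v3+d* v4))
       = kUk - 2*K*Q - K*xUk"
    unfolding kUk_def xUk_def Q_def by (rule ident_gen[OF m g K f vw])
  have q1: "k1*g1 = k1^2" using k(1) by (auto simp: max_def power2_eq_square)
  have q2: "k2*g2 = k2^2" using k(2) by (auto simp: max_def power2_eq_square)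
  have q3: "k3*g3 = k3^2" using k(3) by (auto simp: max_def power2_eq_square)
  have Q2: "Q = k1^2+k2^2+k3^2" unfolding Q_def using q1 q2 q3 k40 by simp
  define S where "S = k1+k2+k3"
  define T where "T = xUk - (e-1)*S/3"
  define PS where "PS = (k1-k2)^2+(k2-k3)^2+(k3-k1)^2"
  have ident2: "kUk - K*xUk = (1-e)/6*PS - S*T"
    unfolding kUk_def T_def S_def PS_def K k40 by (simp add: field_simps power2_eq_square)
  have KS: "K = S" unfolding K S_def k40 by simp
  have tot: "kUk - 2*K*Q - K*xUk = (1-e)/6*PS - S*T - 2*S*(k1^2+k2^2+k3^2)"
    using ident2 KS Q2 by simp
  have k0: "0 \<le> k1" "0 \<le> k2" "0 \<le> k3" using k by auto
  define M where "M = max k1 (max k2 k3)"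
  have M0: "0 \<le> M" "k1 \<le> M" "k2 \<le> M" "k3 \<le> M" unfolding M_def using k0 by auto
  have Mcases: "M = k1 \<or> M = k2 \<or> M = k3" unfolding M_def by auto
  have dpos: "0 < \<delta>" using dab by simp
  have e3: "(2+e)/3 \<le> 1" using e by simp
  have gd1: "g1 - g4 = ((1-e)*(a-b)+(1+2*e)*(c-b))/3" unfolding g u by (simp add: field_simps)
  have gd2: "g2 - g4 = ((1+2*e)*(a-c)+(1-e)*(b-c))/3" unfolding g u by (simp add: field_simps)
  have gd3: "g3 - g4 = ((1+2*e)*(b-a)+(1-e)*(c-a))/3" unfolding g u by (simp add: field_simps)
  have l1: "(1-e)*(a-b) \<le> (1-e)*\<delta>" "(1-e)*(b-c) \<le> (1-e)*\<delta>" "(1-e)*(c-a) \<le> (1-e)*\<delta>"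
    using dab e by (auto intro!: mult_left_mono)
  have l2: "(1+2*e)*(c-b) \<le> (1+2*e)*\<delta>" "(1+2*e)*(a-c) \<le> (1+2*e)*\<delta>" "(1+2*e)*(b-a) \<le> (1+2*e)*\<delta>"
    using dab e by (auto intro!: mult_left_mono)
  have gg: "g1 \<le> \<delta>" "g2 \<le> \<delta>" "g3 \<le> \<delta>"
  proof -
    have "g1 - g4 \<le> (2+e)/3*\<delta>" using gd1 l1 l2 by (simp add: field_simps)
    also have "\<dots> \<le> \<delta>" using e3 dpos by (simp add: mult_le_cancel_right1)
    finally show "g1 \<le> \<delta>" using g4n by simp
  next
    have "g2 - g4 \<le> (2+e)/3*\<delta>" using gd2 l1 l2 by (simp add: field_simps)
    also have "\<dots> \<le> \<delta>" using e3 dpos by (simp add: mult_le_cancel_right1)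
    finally show "g2 \<le> \<delta>" using g4n by simp
  next
    have "g3 - g4 \<le> (2+e)/3*\<delta>" using gd3 l1 l2 by (simp add: field_simps)
    also have "\<dots> \<le> \<delta>" using e3 dpos by (simp add: mult_le_cancel_right1)
    finally show "g3 \<le> \<delta>" using g4n by simp
  qed
  have Md: "M \<le> \<delta>" unfolding M_def using k gg dpos by auto
  have kz: "k1 = 0 \<or> k2 = 0 \<or> k3 = 0" using gsum g4n k by auto
  have PSM: "M^2 \<le> PS"
  proof -
    have "k1^2 \<le> PS \<and> k2^2 \<le> PS \<and> k3^2 \<le> PS"
      using kz unfolding PS_def by (auto simp: power2_commute)
    then show ?thesis using Mcases by auto
  qed
  define z1 where "z1 = ((a-b)+(a-c))/3"
  define z2 where "z2 = ((b-a)+(b-c))/3"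
  define z3 where "z3 = ((c-a)+(c-b))/3"
  have Tid: "T = z1*(-k2+e*k3) + z2*(e*k1-k3) + z3*(-k1+e*k2)"
    unfolding T_def xUk_def S_def z1_def z2_def z3_def dd by (simp add: field_simps)
  have dab2: "a - b < \<delta>" "b - a < \<delta>" "b - c < \<delta>" "c - b < \<delta>" "c - a < \<delta>" "a - c < \<delta>"
    using dab unfolding abs_less_iff by auto
  have zb1: "\<bar>z1\<bar> \<le> 2*\<delta>/3"
  proof -
    have "z1 \<le> 2*\<delta>/3" unfolding z1_def using dab2 by (simp add: field_simps)
    moreover have "-z1 \<le> 2*\<delta>/3" unfolding z1_def using dab2 by (simp add: field_simps)
    ultimately show ?thesis by (simp add: abs_le_iff)
  qed
  have zb2: "\<bar>z2\<bar> \<le> 2*\<delta>/3"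
  proof -
    have "z2 \<le> 2*\<delta>/3" unfolding z2_def using dab2 by (simp add: field_simps)
    moreover have "-z2 \<le> 2*\<delta>/3" unfolding z2_def using dab2 by (simp add: field_simps)
    ultimately show ?thesis by (simp add: abs_le_iff)
  qed
  have zb3: "\<bar>z3\<bar> \<le> 2*\<delta>/3"
  proof -
    have "z3 \<le> 2*\<delta>/3" unfolding z3_def using dab2 by (simp add: field_simps)
    moreover have "-z3 \<le> 2*\<delta>/3" unfolding z3_def using dab2 by (simp add: field_simps)
    ultimately show ?thesis by (simp add: abs_le_iff)
  qed
  note zb = zb1 zb2 zb3
  have ab: "\<bar>-k2+e*k3\<bar> \<le> 2*M" "\<bar>e*k1-k3\<bar> \<le> 2*M" "\<bar>-k1+e*k2\<bar> \<le> 2*M"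
  proof -
    have "e*k1 \<le> M" "e*k2 \<le> M" "e*k3 \<le> M" "0 \<le> e*k1" "0 \<le> e*k2" "0 \<le> e*k3"
      using M0 k0 e by (auto intro: order_trans[OF mult_left_le_one_le])
    then show "\<bar>-k2+e*k3\<bar> \<le> 2*M" "\<bar>e*k1-k3\<bar> \<le> 2*M" "\<bar>-k1+e*k2\<bar> \<le> 2*M"
      using M0 k0 by auto
  qed
  have pb1: "\<bar>z1*(-k2+e*k3)\<bar> \<le> (2*\<delta>/3)*(2*M)"
    unfolding abs_mult by (rule mult_mono[OF zb1 ab(1)]) (use dpos in auto)
  have pb2: "\<bar>z2*(e*k1-k3)\<bar> \<le> (2*\<delta>/3)*(2*M)"
    unfolding abs_mult by (rule mult_mono[OF zb2 ab(2)]) (use dpos in auto)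
  have pb3: "\<bar>z3*(-k1+e*k2)\<bar> \<le> (2*\<delta>/3)*(2*M)"
    unfolding abs_mult by (rule mult_mono[OF zb3 ab(3)]) (use dpos in auto)
  note pb = pb1 pb2 pb3
  have Tb: "\<bar>T\<bar> \<le> 4*\<delta>*M" unfolding Tid using pb by (simp add: abs_if split: if_splits; linarith)
  have S0: "0 \<le> S" "S \<le> 3*M" unfolding S_def using k0 M0 by auto
  have STb: "S*T \<le> (3*M)*(4*\<delta>*M)"
  proof -
    have "S*T \<le> S*\<bar>T\<bar>" using S0 by (simp add: mult_left_mono)
    also have "\<dots> \<le> (3*M)*(4*\<delta>*M)" using S0 Tb dpos M0 by (intro mult_mono) auto
    finally show ?thesis .
  qed
  have sq: "k1^2+k2^2+k3^2 \<le> 3*M^2" using M0 k0 power_mono by (smt (verit))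
  have SQb: "S*(k1^2+k2^2+k3^2) \<le> (3*M)*(3*M^2)"
    using S0 sq by (intro mult_mono) auto
  have M3: "M*M^2 \<le> \<delta>*M^2" using Md by (simp add: mult_right_mono)
  have Mpos: "0 < M"
  proof (rule ccontr)
    assume "\<not> 0 < M"
    then have kk: "k1 = 0" "k2 = 0" "k3 = 0" using M0 k0 by auto
    then have gn: "g1 \<le> 0" "g2 \<le> 0" "g3 \<le> 0" using k by auto
    have "a*g1+b*g2+c*g3+d*g4 = m - m*(a+b+c+d)" unfolding g m by (simp add: algebra_simps)
    then have sxg: "a*g1+b*g2+c*g3+d*g4 = 0" using s1 by simp
    have p: "a*g1 \<le> 0" "b*g2 \<le> 0" "c*g3 \<le> 0" "d*g4 \<le> 0"
      using gn g4n nn by (auto simp: mult_nonneg_nonpos)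
    have z: "a*g1 = 0" "b*g2 = 0" "c*g3 = 0" "d*g4 = 0" using sxg p by linarith+
    have "g4 = 0"
    proof (cases "d = 0")
      case True
      have ds: "\<delta> < 1/3" using dl e by simp
      have "0 < a" using True s1 dab2 nn ds by linarith
      moreover have "0 < b" using True s1 dab2 nn ds by linarith
      moreover have "0 < c" using True s1 dab2 nn ds by linarith
      ultimately have "g1 = 0" "g2 = 0" "g3 = 0" using z by auto
      then show ?thesis using gsum by simp
    next
      case False then show ?thesis using z by simp
    qed
    then have D00: "D = 0" using g4D e by simp
    have p1: "(a-b)^2 = 0" using D00 unfolding D_def by (smt (verit) zero_le_power2)
    have p2: "(b-c)^2 = 0" using D00 unfolding D_def by (smt (verit) zero_le_power2)
    have "a = b \<and> b = c" using p1 p2 by simp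
    then show False using ne by simp
  qed
  have fin: "0 < (1-e)/6*PS - S*T - 2*S*(k1^2+k2^2+k3^2)"
  proof -
    have "(1-e)/6*M^2 \<le> (1-e)/6*PS" using PSM e by simp
    moreover have "0 < (1-e)/60*M^2" using Mpos e by simp
    moreover have "(3*M)*(4*\<delta>*M) = 12*\<delta>*M^2" by (simp add: power2_eq_square)
    moreover have "(3*M)*(3*M^2) = 9*(M*M^2)" by simp
    ultimately show ?thesis using STb SQb M3 dl by (simp add: field_simps; linarith)
  qed
  show ?thesis using ident tot fin by simp
qed
lemma maxsq: "((\<lambda>u::real. (max 0 u)^2) has_real_derivative 2 * max 0 u) (at u)"
proof -
  consider "u > 0" | "u < 0" | "u = 0" by linarith
  then show ?thesis
  proof cases
    case 1
    have h: "((\<lambda>u::real. u^2) has_real_derivative 2 * max 0 u) (at u)"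
      using 1 by (auto intro!: derivative_eq_intros)
    show ?thesis
      by (rule has_field_derivative_transform_within_open[OF h, where S="{0<..}"]) (use 1 in auto)
  next
    case 2
    have h: "((\<lambda>u::real. 0) has_real_derivative 2 * max 0 u) (at u)"
      using 2 by (auto intro!: derivative_eq_intros)
    show ?thesis
      by (rule has_field_derivative_transform_within_open[OF h, where S="{..<0}"]) (use 2 in auto)
  next
    case 3
    have "((\<lambda>y::real. ((max 0 y)^2 - (max 0 0)^2) / (y - 0)) \<longlongrightarrow> 0) (at 0)"
    proof (rule Lim_null_comparison)
      show "\<forall>\<^sub>F y in at 0. norm (((max 0 y)^2 - (max 0 0)^2) / (y - 0)) \<le> \<bar>y\<bar>"
        by (intro always_eventually allI) (auto simp: max_def power2_eq_square abs_mult divide_simps)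
      show "((\<lambda>y::real. \<bar>y\<bar>) \<longlongrightarrow> 0) (at 0)"
        using tendsto_rabs_zero[OF tendsto_ident_at[of 0 UNIV]] by simp
    qed
    then show ?thesis using 3 by (simp add: has_field_derivative_iff)
  qed
qed
lemma comp: assumes "(x has_vector_derivative F) (at t within I)"
  shows "((\<lambda>s. x s $ j) has_real_derivative F $ j) (at t within I)"
  using bounded_linear.has_vector_derivative[OF bounded_linear_vec_nth assms]
  by (simp add: has_real_derivative_iff_has_vector_derivative)

lemma vec4: "(vector [a,b,c,d] :: 'a::zero^4) $ 1 = a" "(vector [a,b,c,d] :: 'a::zero^4) $ 2 = b"
  "(vector [a,b,c,d] :: 'a::zero^4) $ 3 = c" "(vector [a,b,c,d] :: 'a::zero^4) $ 4 = d"
  unfolding vector_def by simp_all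

lemma Uv: "(U0 e *v y) $ 1 = - y$2 + e * y$3"
  "(U0 e *v y) $ 2 = e * y$1 - y$3"
  "(U0 e *v y) $ 3 = - y$1 + e * y$2"
  "(U0 e *v y) $ 4 = (-1+e)/3 * (y$1+y$2+y$3)"
  by (simp_all add: U0_def matrix_vector_mult_def sum_4 vec4 algebra_simps)

lemma inner_exp: "y \<bullet> (U0 e *v y) = y$1*(-y$2+e*y$3) + y$2*(e*y$1 - y$3) + y$3*(-y$1+e*y$2)
   + y$4*((-1+e)/3*(y$1+y$2+y$3))"
  by (simp add: inner_vec_def sum_4 Uv)

theorem lemma3:
  fixes eps :: real
  assumes "0 < eps" and "eps < 1"
  shows "\<exists>N. openin (top_of_set simplex4) N \<and> E0 \<subseteq> N \<and>
    (\<forall>(I::real set) (x::real \<Rightarrow> real^4).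
       is_interval I \<longrightarrow>
       (\<forall>t\<in>I. x t \<in> simplex4 \<and>
          (x has_vector_derivative bnn_field (U0 eps) (x t)) (at t within I)) \<longrightarrow>
       (\<forall>t\<in>I. x t \<in> N - E0 \<longrightarrow>
          (\<exists>d. ((\<lambda>s. V0 eps (x s)) has_real_derivative d) (at t within I) \<and> d > 0)))"
proof -
  define \<delta> where "\<delta> = (1-eps)/200"
  define N where "N = simplex4 \<inter> {y. \<bar>y$1-y$2\<bar> < \<delta> \<and> \<bar>y$2-y$3\<bar> < \<delta> \<and> \<bar>y$3-y$1\<bar> < \<delta>}"
  have openN: "openin (top_of_set simplex4) N" unfolding N_def
    by (intro openin_open_Int open_Collect_conj open_Collect_less continuous_intros)
  have E0N: "E0 \<subseteq> N"
  proof
    fix y assume "y \<in> E0"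
    then obtain l where l: "l \<in> {0..1}" "y = l *\<^sub>R nvec + (1-l) *\<^sub>R e4" unfolding E0_def by auto
    have c: "y$1 = l/3" "y$2 = l/3" "y$3 = l/3" "y$4 = 1-l"
      using l(2) by (simp_all add: nvec_def e4_def vec4 axis_def)
    have "y \<in> simplex4" unfolding simplex4_def using c l(1) by (auto simp: forall_4 sum_4)
    then show "y \<in> N" unfolding N_def using c \<delta>_def assms by simp
  qed
  have key: "\<forall>(I::real set) (x::real \<Rightarrow> real^4).
       is_interval I \<longrightarrow>
       (\<forall>t\<in>I. x t \<in> simplex4 \<and>
          (x has_vector_derivative bnn_field (U0 eps) (x t)) (at t within I)) \<longrightarrow>
       (\<forall>t\<in>I. x t \<in> N - E0 \<longrightarrow>
          (\<exists>d. ((\<lambda>s. V0 eps (x s)) has_real_derivative d) (at t within I) \<and> d > 0))"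
  proof (intro allI impI ballI)
    fix I :: "real set" and x :: "real \<Rightarrow> real^4" and t
    assume hyp: "\<forall>t\<in>I. x t \<in> simplex4 \<and>
          (x has_vector_derivative bnn_field (U0 eps) (x t)) (at t within I)"
      and tI: "t \<in> I" and xN: "x t \<in> N - E0"
    have xd: "(x has_vector_derivative bnn_field (U0 eps) (x t)) (at t within I)"
      and xs: "x t \<in> simplex4" using hyp tI by blast+
    define a where "a = x t $ 1"
    define b where "b = x t $ 2"
    define c where "c = x t $ 3"
    define d where "d = x t $ 4"
    define u1 where "u1 = -b + eps*c"
    define u2 where "u2 = eps*a - c"
    define u3 where "u3 = -a + eps*b"
    define u4 where "u4 = (-1+eps)/3*(a+b+c)"
    define m where "m = a*u1+b*u2+c*u3+d*u4"
    define g1 where "g1 = u1 - m"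
    define g2 where "g2 = u2 - m"
    define g3 where "g3 = u3 - m"
    define g4 where "g4 = u4 - m"
    define k1 where "k1 = max 0 g1"
    define k2 where "k2 = max 0 g2"
    define k3 where "k3 = max 0 g3"
    define k4 where "k4 = max 0 g4"
    define K where "K = k1+k2+k3+k4"
    define f1 where "f1 = k1 - a*K"
    define f2 where "f2 = k2 - b*K"
    define f3 where "f3 = k3 - c*K"
    define f4 where "f4 = k4 - d*K"
    define v1 where "v1 = -f2 + eps*f3"
    define v2 where "v2 = eps*f1 - f3"
    define v3 where "v3 = -f1 + eps*f2"
    define v4 where "v4 = (-1+eps)/3*(f1+f2+f3)"
    have Fc: "bnn_field (U0 eps) (x t) $ 1 = f1" "bnn_field (U0 eps) (x t) $ 2 = f2"
      "bnn_field (U0 eps) (x t) $ 3 = f3" "bnn_field (U0 eps) (x t) $ 4 = f4"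
      unfolding bnn_field_def bnn_k_def f1_def f2_def f3_def f4_def K_def k1_def k2_def k3_def k4_def
        g1_def g2_def g3_def g4_def u1_def u2_def u3_def u4_def m_def a_def b_def c_def d_def
      by (simp_all add: sum_4 Uv inner_exp)
    have h1: "((\<lambda>s. x s $ 1) has_real_derivative f1) (at t within I)" using comp[OF xd, of 1] Fc by simp
    have h2: "((\<lambda>s. x s $ 2) has_real_derivative f2) (at t within I)" using comp[OF xd, of 2] Fc by simp
    have h3: "((\<lambda>s. x s $ 3) has_real_derivative f3) (at t within I)" using comp[OF xd, of 3] Fc by simp
    have h4: "((\<lambda>s. x s $ 4) has_real_derivative f4) (at t within I)" using comp[OF xd, of 4] Fc by simp
    define mf where "mf y = y$1*(-y$2+eps*y$3) + y$2*(eps*y$1 - y$3) + y$3*(-y$1+eps*y$2)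
          + y$4*((-1+eps)/3*(y$1+y$2+y$3))" for y :: "real^4"
    have dm: "((\<lambda>s. mf (x s)) has_real_derivative (f1*u1+f2*u2+f3*u3+f4*u4) + (a* v1+b* v2+c* v3+d* v4)) (at t within I)"
      unfolding mf_def
      apply (rule derivative_eq_intros h1 h2 h3 h4 refl)+
      unfolding u1_def u2_def u3_def u4_def v1_def v2_def v3_def v4_def a_def b_def c_def d_def
      by (simp add: algebra_simps)

    define FU where "FU = f1*u1+f2*u2+f3*u3+f4*u4"
    define XV where "XV = a * v1+b * v2+c * v3+d * v4"
    have dm': "((\<lambda>s. mf (x s)) has_real_derivative FU + XV) (at t within I)"
      using dm unfolding FU_def XV_def .
    have l1: "((\<lambda>s. -x s$2 + eps*x s$3) has_real_derivative v1) (at t within I)"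
      unfolding v1_def by (rule derivative_eq_intros h1 h2 h3 h4 refl)+ simp
    have l2: "((\<lambda>s. eps*x s$1 - x s$3) has_real_derivative v2) (at t within I)"
      unfolding v2_def by (rule derivative_eq_intros h1 h2 h3 h4 refl)+ simp
    have l3: "((\<lambda>s. -x s$1 + eps*x s$2) has_real_derivative v3) (at t within I)"
      unfolding v3_def by (rule derivative_eq_intros h1 h2 h3 h4 refl)+ simp
    have l4: "((\<lambda>s. (-1+eps)/3*(x s$1+x s$2+x s$3)) has_real_derivative v4) (at t within I)"
      unfolding v4_def by (rule derivative_eq_intros h1 h2 h3 h4 refl)+ simp
    have G1: "((\<lambda>s. (-x s$2 + eps*x s$3) - mf (x s)) has_real_derivative v1 - (FU+XV)) (at t within I)"
      by (rule DERIV_diff[OF l1 dm'])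
    have G2: "((\<lambda>s. (eps*x s$1 - x s$3) - mf (x s)) has_real_derivative v2 - (FU+XV)) (at t within I)"
      by (rule DERIV_diff[OF l2 dm'])
    have G3: "((\<lambda>s. (-x s$1 + eps*x s$2) - mf (x s)) has_real_derivative v3 - (FU+XV)) (at t within I)"
      by (rule DERIV_diff[OF l3 dm'])
    have G4: "((\<lambda>s. (-1+eps)/3*(x s$1+x s$2+x s$3) - mf (x s)) has_real_derivative v4 - (FU+XV)) (at t within I)"
      by (rule DERIV_diff[OF l4 dm'])
    have Vexp: "V0 eps y = 1/2*((max 0 ((-y$2 + eps*y$3) - mf y))^2 + (max 0 ((eps*y$1 - y$3) - mf y))^2
       + (max 0 ((-y$1 + eps*y$2) - mf y))^2 + (max 0 ((-1+eps)/3*(y$1+y$2+y$3) - mf y))^2)" for y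
      unfolding V0_def bnn_k_def mf_def by (simp add: sum_4 Uv inner_exp)
    have gv: "(-x t$2 + eps*x t$3) - mf (x t) = g1" "(eps*x t$1 - x t$3) - mf (x t) = g2"
       "(-x t$1 + eps*x t$2) - mf (x t) = g3" "(-1+eps)/3*(x t$1+x t$2+x t$3) - mf (x t) = g4"
      unfolding g1_def g2_def g3_def g4_def m_def mf_def u1_def u2_def u3_def u4_def a_def b_def c_def d_def
      by simp_all
    have DV: "((\<lambda>s. V0 eps (x s)) has_real_derivative
       1/2*(2*k1*(v1 - (FU+XV)) + 2*k2*(v2 - (FU+XV)) + 2*k3*(v3 - (FU+XV)) + 2*k4*(v4 - (FU+XV)))) (at t within I)"
      unfolding Vexp
      using DERIV_cmult[OF DERIV_add[OF DERIV_add[OF DERIV_add[OF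
          DERIV_chain2[OF maxsq G1] DERIV_chain2[OF maxsq G2]] DERIV_chain2[OF maxsq G3]] DERIV_chain2[OF maxsq G4]], of "1/2"]
      unfolding gv k1_def k2_def k3_def k4_def by simp
    have nn: "0 \<le> a" "0 \<le> b" "0 \<le> c" "0 \<le> d" using xs unfolding simplex4_def a_def b_def c_def d_def by auto
    have s1: "a+b+c+d = 1" using xs unfolding simplex4_def a_def b_def c_def d_def by (simp add: sum_4)
    have dab: "\<bar>a-b\<bar> < \<delta>" "\<bar>b-c\<bar> < \<delta>" "\<bar>c-a\<bar> < \<delta>"
      using xN unfolding N_def a_def b_def c_def by auto
    have ne: "\<not>(a=b \<and> b=c)"
    proof
      assume eq: "a=b \<and> b=c"
      have "x t = (3*a) *\<^sub>R nvec + (1 - 3*a) *\<^sub>R e4"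
        using eq s1 unfolding a_def b_def c_def d_def
        by (simp add: vec_eq_iff forall_4 nvec_def e4_def vec4 axis_def)
      moreover have "3*a \<in> {0..1}" using nn s1 eq by auto
      ultimately have "x t \<in> E0" unfolding E0_def by blast
      then show False using xN by simp
    qed
    have pos: "0 < k1*(v1 - FU - XV) + k2*(v2 - FU - XV) + k3*(v3 - FU - XV) + k4*(v4 - FU - XV)"
      unfolding FU_def XV_def
      by (rule alg[OF assms nn s1 \<delta>_def dab ne u1_def u2_def u3_def u4_def m_def g1_def g2_def g3_def g4_def
        k1_def k2_def k3_def k4_def K_def f1_def f2_def f3_def f4_def v1_def v2_def v3_def v4_def])
    define dd where "dd = 1/2*(2*k1*(v1 - (FU+XV)) + 2*k2*(v2 - (FU+XV)) + 2*k3*(v3 - (FU+XV)) + 2*k4*(v4 - (FU+XV)))"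
    have deq: "dd = k1*(v1 - FU - XV) + k2*(v2 - FU - XV) + k3*(v3 - FU - XV) + k4*(v4 - FU - XV)"
      unfolding dd_def by (simp add: algebra_simps)
    have DV': "((\<lambda>s. V0 eps (x s)) has_real_derivative dd) (at t within I)" using DV unfolding dd_def .
    show "\<exists>d. ((\<lambda>s. V0 eps (x s)) has_real_derivative d) (at t within I) \<and> d > 0"
      using DV' pos deq by auto
  qed
  show ?thesis by (rule exI[of _ N]) (intro conjI openN E0N key)
qed

end
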